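(* Let $q$ be a prime power, $t\geq 2$ and $n\geq 1$ integers, and $\sigma=\begin{pmatrix} a & b\\ c & d\end{pmatrix}\in\mathrm{GL}_2(\mathbb{F}_q)$. Suppose that the polynomial $x^{nt}-A\in\mathbb{F}_q[x]$, with $A\neq -d/c$, is irreducible over $\mathbb{F}_q$, and if $t$ is even assume moreover $q\equiv 1\pmod 4$. Then $g_0=P_{\sigma^{-1}}(x^n-A)$ is an irreducible polynomial of degree $n$ with $g_0(\sigma\cdot\infty)\neq 0$, and $g_1=g_0^{R_{\sigma,t}}$ is irreducible.
   Context: For $\sigma=\begin{pmatrix} a & b\\ c & d\end{pmatrix}\in\mathrm{GL}_2(\mathbb{F}_q)$, $\sigma\cdot\infty=a/c$ if $c\neq 0$ and $\sigma\cdot\infty=\infty$ if $c=0$. For $f\in\mathbb{F}_q[x]$ of degree $m$, $P_\sigma(f)(x)=(cx+d)^m f\!\left(\frac{ax+b}{cx+d}\right)$; $\sigma^{-1}$ is the inverse matrix. $S_t(f)(x)=f(x^t)$, and the $R_{\sigma,t}$-transform is $g^{R_{\sigma,t}}=P_{\sigma^{-1}}\circ S_t\circ P_\sigma(g)$ (each $P$ using the degree of its input). *)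

theory Defs
  imports "HOL-Computational_Algebra.Computational_Algebra"
begin

text \<open>A matrix sigma = ((a,b),(c,d)) in GL_2(F_q) is represented by its four entries (a,b,c,d).\<close>

type_synonym 'a mat2 = "'a \<times> 'a \<times> 'a \<times> 'a"

definition gl2 :: "('a::field) mat2 \<Rightarrow> bool" where
  "gl2 s = (case s of (a,b,c,d) \<Rightarrow> a * d - b * c \<noteq> 0)"

definition inv2 :: "('a::field) mat2 \<Rightarrow> 'a mat2" where
  "inv2 s = (case s of (a,b,c,d) \<Rightarrow>
     (let D = a * d - b * c in (d / D, - b / D, - c / D, a / D)))"

text \<open>sigma acting on infinity: None stands for infinity.\<close>
definition moeb_infty :: "('a::field) mat2 \<Rightarrow> 'a option" where
  "moeb_infty s = (case s of (a,b,c,d) \<Rightarrow> if c \<noteq> 0 then Some (a / c) else None)"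

definition nonzero_at :: "('a::field) poly \<Rightarrow> 'a option \<Rightarrow> bool" where
  "nonzero_at f p = (case p of None \<Rightarrow> True | Some x \<Rightarrow> poly f x \<noteq> 0)"

text \<open>P_sigma(f)(x) = (cx+d)^m f((ax+b)/(cx+d)), m = deg f.\<close>
definition P_sig :: "('a::field) mat2 \<Rightarrow> 'a poly \<Rightarrow> 'a poly" where
  "P_sig s f = (case s of (a,b,c,d) \<Rightarrow>
     (\<Sum>i\<le>degree f. smult (coeff f i) ([:b, a:] ^ i * [:d, c:] ^ (degree f - i))))"

definition S_t :: "nat \<Rightarrow> ('a::comm_semiring_1) poly \<Rightarrow> 'a poly" where
  "S_t t f = pcompose f (monom 1 t)"

definition R_trans :: "('a::field) mat2 \<Rightarrow> nat \<Rightarrow> 'a poly \<Rightarrow> 'a poly" where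
  "R_trans s t g = P_sig (inv2 s) (S_t t (P_sig s g))"

end

theory Submission
  imports Defs
begin

definition Hm :: "('a::field) mat2 \<Rightarrow> nat \<Rightarrow> 'a poly \<Rightarrow> 'a poly" where
  "Hm s m f = (case s of (a,b,c,d) \<Rightarrow>
     (\<Sum>i\<le>m. smult (coeff f i) ([:b, a:] ^ i * [:d, c:] ^ (m - i))))"

definition mul2 :: "('a::field) mat2 \<Rightarrow> 'a mat2 \<Rightarrow> 'a mat2" where
  "mul2 s u = (case s of (a,b,c,d) \<Rightarrow> case u of (a',b',c',d') \<Rightarrow>
     (a*a' + b*c', a*b' + b*d', c*a' + d*c', c*b' + d*d'))"

lemma smult_sum_right: "smult k (sum F S) = (\<Sum>i\<in>S. smult k (F i))"
  by (induction S rule: infinite_finite_induct) (auto simp: smult_add_right)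

lemma P_sig_Hm: "P_sig s f = Hm s (degree f) f"
  by (simp add: P_sig_def Hm_def)

lemma Hm_add: "Hm s m (f + g) = Hm s m f + Hm s m g"
  by (cases s) (simp add: Hm_def smult_add_left sum.distrib)

lemma Hm_diff: "Hm s m (f - g) = Hm s m f - Hm s m g"
  by (cases s) (simp add: Hm_def smult_diff_left sum_subtractf)

lemma Hm_smult: "Hm s m (smult k f) = smult k (Hm s m f)"
proof (cases s)
  case (fields a b c d)
  have "smult k (\<Sum>i\<le>m. smult (coeff f i) ([:b, a:] ^ i * [:d, c:] ^ (m - i)))
    = (\<Sum>i\<le>m. smult k (smult (coeff f i) ([:b, a:] ^ i * [:d, c:] ^ (m - i))))"
    by (rule smult_sum_right)
  then show ?thesis by (simp add: fields Hm_def)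
qed

lemma Hm_0[simp]: "Hm s m 0 = 0"
  by (cases s) (simp add: Hm_def)

lemma Hm_sum: "finite S \<Longrightarrow> Hm s m (sum F S) = (\<Sum>x\<in>S. Hm s m (F x))"
  by (induction S rule: finite_induct) (simp_all add: Hm_add)

lemma Hm_pCons:
  "Hm (a,b,c,d) (Suc m) (pCons k h) = smult k ([:d,c:] ^ Suc m) + [:b,a:] * Hm (a,b,c,d) m h"
proof -
  have "(\<Sum>i\<le>m. smult (coeff h i) ([:b, a:] ^ Suc i * [:d, c:] ^ (m - i)))
     = [:b,a:] * (\<Sum>i\<le>m. smult (coeff h i) ([:b, a:] ^ i * [:d, c:] ^ (m - i)))"
    unfolding sum_distrib_left
    by (rule sum.cong) (simp_all only: mult_smult_right power_Suc mult.assoc)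
  then show ?thesis unfolding Hm_def
    by (simp only: sum.atMost_Suc_shift) simp
qed

lemma Hm_zero_m: "Hm (a,b,c,d) 0 f = [:coeff f 0:]"
  by (simp add: Hm_def)

lemma Hm_degree: "degree (Hm s m f) \<le> m"
proof (cases s)
  case (fields a b c d)
  show ?thesis unfolding fields Hm_def
    apply simp
    apply (rule degree_sum_le, simp)
    apply (rule order.trans[OF degree_smult_le])
    apply (rule order.trans[OF degree_mult_le])
    apply (rule order.trans[OF add_mono[OF degree_power_le degree_power_le]])
    apply (auto intro: order.trans[OF degree_pCons_le])
    done
qed

lemma Hm_raise:
  assumes "degree g \<le> m"
  shows "Hm (a,b,c,d) (m+k) g = [:d,c:]^k * Hm (a,b,c,d) m g"
proof -
  have "(\<Sum>i\<le>m+k. smult (coeff g i) ([:b, a:] ^ i * [:d, c:] ^ (m + k - i)))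
      = (\<Sum>i\<le>m. smult (coeff g i) ([:b, a:] ^ i * [:d, c:] ^ (m + k - i)))"
  proof (rule sum.mono_neutral_right)
    show "\<forall>i\<in>{..m + k} - {..m}. smult (coeff g i) ([:b, a:] ^ i * [:d, c:] ^ (m + k - i)) = 0"
      using assms by (auto simp: coeff_eq_0)
  qed auto
  also have "\<dots> = (\<Sum>i\<le>m. [:d,c:]^k * smult (coeff g i) ([:b, a:] ^ i * [:d, c:] ^ (m - i)))"
  proof (rule sum.cong)
    fix i assume "i \<in> {..m}"
    then have "m + k - i = k + (m - i)" by auto
    then show "smult (coeff g i) ([:b, a:] ^ i * [:d, c:] ^ (m + k - i)) =
       [:d,c:]^k * smult (coeff g i) ([:b, a:] ^ i * [:d, c:] ^ (m - i))"
      by (simp add: power_add algebra_simps)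
  qed simp
  finally show ?thesis by (simp add: Hm_def sum_distrib_left)
qed

lemma Hm_mult:
  assumes "degree f \<le> m1" "degree g \<le> m2"
  shows "Hm (a,b,c,d) (m1+m2) (f*g) = Hm (a,b,c,d) m1 f * Hm (a,b,c,d) m2 g"
  using assms(1)
proof (induction m1 arbitrary: f)
  case 0
  then obtain k where f: "f = [:k:]" by (metis degree_0_id le_0_eq)
  have "Hm (a,b,c,d) (0+m2) (f*g) = smult k (Hm (a,b,c,d) m2 g)"
    by (simp add: f Hm_smult)
  then show ?case by (simp add: f Hm_def)
next
  case (Suc m1)
  obtain k f' where f: "f = pCons k f'" by (cases f)
  have df: "degree f' \<le> m1" using Suc.prems f
    by (cases "f' = 0") auto
  have "f * g = smult k g + pCons 0 (f' * g)" by (simp add: f)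
  then have "Hm (a,b,c,d) (Suc m1 + m2) (f*g)
     = smult k (Hm (a,b,c,d) (m2 + Suc m1) g) + Hm (a,b,c,d) (Suc (m1 + m2)) (pCons 0 (f' * g))"
    by (simp add: Hm_add Hm_smult add.commute)
  also have "\<dots> = smult k ([:d,c:]^Suc m1 * Hm (a,b,c,d) m2 g) + [:b,a:] * (Hm (a,b,c,d) m1 f' * Hm (a,b,c,d) m2 g)"
    by (simp only: Hm_raise[OF assms(2)] Hm_pCons Suc.IH[OF df]) simp
  also have "\<dots> = Hm (a,b,c,d) (Suc m1) f * Hm (a,b,c,d) m2 g"
    by (simp add: f Hm_pCons algebra_simps)
  finally show ?case .
qed

lemma Hm_pow:
  assumes "degree p \<le> 1"
  shows "Hm (a,b,c,d) k (p^k) = (Hm (a,b,c,d) 1 p)^k"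
proof (induction k)
  case 0
  then show ?case by (simp add: Hm_zero_m)
next
  case (Suc k)
  have "degree p * k \<le> k" using mult_le_mono1[OF assms, of k] by simp
  then have dk: "degree (p^k) \<le> k"
    using order.trans[OF degree_power_le[of p k]] by blast
  have "Hm (a,b,c,d) (Suc k) (p^Suc k) = Hm (a,b,c,d) (1 + k) (p * p^k)" by simp
  also have "\<dots> = Hm (a,b,c,d) 1 p * Hm (a,b,c,d) k (p^k)"
    by (rule Hm_mult[OF assms dk])
  finally show ?case using Suc.IH by simp
qed

lemma Hm_lin: "Hm (a,b,c,d) (Suc 0) [:y,x:] = [:y*d + x*b, y*c + x*a:]"
  by (simp add: Hm_def algebra_simps)

lemma Hm_comp:
  "Hm (a,b,c,d) m (Hm (al,be,ga,de) m f) = Hm (mul2 (al,be,ga,de) (a,b,c,d)) m f"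
proof -
  have "Hm (a,b,c,d) m (Hm (al,be,ga,de) m f)
     = (\<Sum>i\<le>m. Hm (a,b,c,d) m (smult (coeff f i) ([:be, al:] ^ i * [:de, ga:] ^ (m - i))))"
    by (simp add: Hm_def[of "(al,be,ga,de)"] Hm_sum)
  also have "\<dots> = (\<Sum>i\<le>m. smult (coeff f i) ([:al*b+be*d, al*a+be*c:] ^ i * [:ga*b+de*d, ga*a+de*c:] ^ (m - i)))"
  proof (rule sum.cong)
    fix i assume "i \<in> {..m}"
    then have mi: "m = i + (m - i)" by auto
    have "Hm (a,b,c,d) m ([:be, al:] ^ i * [:de, ga:] ^ (m - i))
       = Hm (a,b,c,d) i ([:be, al:] ^ i) * Hm (a,b,c,d) (m-i) ([:de, ga:] ^ (m - i))"
      by (subst mi, rule Hm_mult) (auto intro: order.trans[OF degree_power_le])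
    also have "\<dots> = [:al*b+be*d, al*a+be*c:] ^ i * [:ga*b+de*d, ga*a+de*c:] ^ (m - i)"
      by (simp add: Hm_pow Hm_lin algebra_simps)
    finally show "Hm (a,b,c,d) m (smult (coeff f i) ([:be, al:] ^ i * [:de, ga:] ^ (m - i))) =
      smult (coeff f i) ([:al*b+be*d, al*a+be*c:] ^ i * [:ga*b+de*d, ga*a+de*c:] ^ (m - i))"
      by (simp add: Hm_smult)
  qed simp
  finally show ?thesis by (simp add: Hm_def mul2_def)
qed

lemma Hm_id: "degree f \<le> m \<Longrightarrow> Hm (1,0,0,1) m f = f"
  using poly_as_sum_of_monoms'[of f m] by (simp add: Hm_def pCons_one monom_altdef)

lemma mul2_inv2: "gl2 s \<Longrightarrow> mul2 (inv2 s) s = (1,0,0,1)"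
proof (cases s)
  case (fields a b c d)
  assume "gl2 s"
  then have D: "a*d - b*c \<noteq> 0" by (simp add: fields gl2_def)
  have g1: "d/E*a + -b/E*c = (a*d - b*c)/E" for E :: 'a by (cases "E = 0") (simp_all add: field_simps)
  have g4: "-c/E*b + a/E*d = (a*d - b*c)/E" for E :: 'a by (cases "E = 0") (simp_all add: field_simps)
  have 1: "d/(a*d - b*c)*a + -b/(a*d - b*c)*c = 1" using D by (simp only: g1) simp
  have 2: "d/(a*d - b*c)*b + -b/(a*d - b*c)*d = 0" by (simp add: field_simps)
  have 3: "-c/(a*d - b*c)*a + a/(a*d - b*c)*c = 0" by (simp add: field_simps)
  have 4: "-c/(a*d - b*c)*b + a/(a*d - b*c)*d = 1" using D by (simp only: g4) simp
  show ?thesis unfolding fields inv2_def mul2_def Let_def using 1 2 3 4 by simp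
qed

lemma irr_split:
  fixes p :: "'a::field poly"
  assumes "irreducible p" "p = u * v"
  shows "degree u = 0 \<or> degree v = 0"
proof -
  have "p \<noteq> 0" using assms(1) by auto
  then have u0: "u \<noteq> 0" and v0: "v \<noteq> 0" using assms(2) by auto
  have "is_unit u \<or> is_unit v" using irreducibleD[OF assms] .
  then show ?thesis using is_unit_iff_degree[OF u0] is_unit_iff_degree[OF v0] by auto
qed

lemma irr_intro:
  fixes p :: "'a::field poly"
  assumes "degree p \<ge> 1" "\<And>u v. p = u * v \<Longrightarrow> degree u = 0 \<or> degree v = 0"
  shows "irreducible p"
proof (rule irreducibleI)
  show "p \<noteq> 0" using assms(1) by auto
  then show "\<not> is_unit p" using assms(1) is_unit_iff_degree[of p] by auto
  fix u v assume uv: "p = u * v"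
  then have u0: "u \<noteq> 0" and v0: "v \<noteq> 0" using \<open>p \<noteq> 0\<close> by auto
  have "degree u = 0 \<or> degree v = 0" using assms(2)[OF uv] .
  then show "is_unit u \<or> is_unit v" using is_unit_iff_degree[OF u0] is_unit_iff_degree[OF v0] by auto
qed

lemma Hm_preserve:
  fixes f :: "'a::field poly"
  assumes hinv: "mul2 (a,b,c,d) sv = (1,0,0,1)" and irr: "irreducible f"
    and df: "degree f = m" and dg: "degree (Hm (a,b,c,d) m f) = m"
  shows "irreducible (Hm (a,b,c,d) m f)"
proof -
  obtain a2 b2 c2 d2 where sv: "sv = (a2,b2,c2,d2)" by (cases sv)
  have hback: "Hm sv m (Hm (a,b,c,d) m f) = f"
    using Hm_comp[of a2 b2 c2 d2 m a b c d f] hinv df sv Hm_id[of f m] by simp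
  have "f \<noteq> 0" "\<not> is_unit f" using irr irreducible_not_unit by auto
  then have m1: "m \<ge> 1" using df is_unit_iff_degree[of f] by auto
  show ?thesis
  proof (rule irr_intro)
    show "1 \<le> degree (Hm (a,b,c,d) m f)" using dg m1 by simp
    fix u v assume uv: "Hm (a,b,c,d) m f = u * v"
    have "u \<noteq> 0" "v \<noteq> 0" using uv dg m1 by auto
    then have muv: "m = degree u + degree v" using uv dg degree_mult_eq[of u v] by simp
    have "f = Hm sv (degree u + degree v) (u * v)" using hback uv muv by simp
    also have "\<dots> = Hm sv (degree u) u * Hm sv (degree v) v"
      unfolding sv by (rule Hm_mult) auto
    finally have fe: "f = Hm sv (degree u) u * Hm sv (degree v) v" .
    have "f \<noteq> 0" using irr by auto
    then have nz: "Hm sv (degree u) u \<noteq> 0" "Hm sv (degree v) v \<noteq> 0" using fe by auto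
    have "degree f = degree (Hm sv (degree u) u) + degree (Hm sv (degree v) v)"
      using fe degree_mult_eq[OF nz] by simp
    moreover have "degree (Hm sv (degree u) u) \<le> degree u" "degree (Hm sv (degree v) v) \<le> degree v"
      by (rule Hm_degree)+
    ultimately have "degree (Hm sv (degree u) u) = degree u" "degree (Hm sv (degree v) v) = degree v"
      using df muv by linarith+
    then show "degree u = 0 \<or> degree v = 0" using irr_split[OF irr fe] by simp
  qed
qed

lemma pcompose_monom1: "pcompose (monom 1 n) q = q ^ n"
  by (induction n) (simp_all add: monom_Suc pcompose_pCons monom_0 pCons_one flip: pCons_one)

lemma degree_xn_minus: "n \<ge> 1 \<Longrightarrow> degree (monom (1::'a::field) n - [:A:]) = n"
proof -
  assume n: "n \<ge> 1"
  have "coeff (monom (1::'a) n - [:A:]) n = 1" using n by (simp add: coeff_pCons split: nat.splits)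
  moreover have "degree (monom (1::'a) n - [:A:]) \<le> n"
    using n by (intro degree_diff_le) (auto simp: degree_monom_le)
  ultimately show ?thesis by (metis le_antisym le_degree one_neq_zero)
qed

lemma no_power:
  fixes A y :: "'a::field"
  assumes irr: "irreducible (monom 1 (k*t) - [:A:])" and k: "k \<ge> 2" and t: "t \<ge> 1"
  shows "A \<noteq> y ^ k"
proof
  assume A: "A = y ^ k"
  let ?X = "monom (1::'a) t"
  have "monom 1 (k*t) - [:A:] = ?X ^ k - [:y:] ^ k"
    by (simp add: A monom_power poly_const_pow mult.commute)
  also have "\<dots> = (?X - [:y:]) * (\<Sum>i<k. [:y:] ^ (k - Suc i) * ?X ^ i)"
    by (rule power_diff_sumr2)
  finally have e: "monom 1 (k*t) - [:A:] = (?X - [:y:]) * (\<Sum>i<k. [:y:] ^ (k - Suc i) * ?X ^ i)" .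
  have d1: "degree (?X - [:y:]) = t" using degree_xn_minus[OF t] .
  have kt: "k * t \<ge> 1" using k t mult_le_mono[of 1 k 1 t] by simp
  have dkt: "degree (monom (1::'a) (k*t) - [:A:]) = k * t" using degree_xn_minus[OF kt] .
  have nz: "monom (1::'a) (k*t) - [:A:] \<noteq> 0" using dkt kt by auto
  then have nzS: "(\<Sum>i<k. [:y:] ^ (k - Suc i) * ?X ^ i) \<noteq> 0" and nzX: "?X - [:y:] \<noteq> 0"
    using e by auto
  have "degree ((?X - [:y:]) * (\<Sum>i<k. [:y:] ^ (k - Suc i) * ?X ^ i))
     = t + degree (\<Sum>i<k. [:y:] ^ (k - Suc i) * ?X ^ i)"
    using d1 degree_mult_eq[OF nzX nzS] by simp
  then have "k * t = t + degree (\<Sum>i<k. [:y:] ^ (k - Suc i) * ?X ^ i)"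
    using e dkt by simp
  moreover have "k * t \<ge> 2 * t" using k by simp
  ultimately have "degree (\<Sum>i<k. [:y:] ^ (k - Suc i) * ?X ^ i) \<noteq> 0" using t by linarith
  then show False using irr_split[OF irr e] d1 t by simp
qed

lemma coeff_lin_pow: "coeff ([:b,a:]^n) n = (a::'a::field)^n"
proof (induction n)
  case (Suc n)
  have "degree [:b,a:] \<le> 1" by simp
  then have "degree [:b,a:] * n \<le> n" using mult_le_mono1[of _ 1 n] by fastforce
  then have "degree ([:b,a:]^n) \<le> n"
    using order.trans[OF degree_power_le[of "[:b,a:]" n]] by blast
  then have "coeff ([:b,a:]^n) (Suc n) = 0" by (simp add: coeff_eq_0)
  then show ?case using Suc by (simp add: coeff_pCons)
qed simp

lemma Hm_monom: "Hm (a,b,c,d) m (monom e k) = smult e ([:b,a:]^k * [:d,c:]^(m-k))" if "k \<le> m"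
proof -
  have "(\<Sum>i\<le>m. smult (coeff (monom e k) i) ([:b, a:] ^ i * [:d, c:] ^ (m - i)))
     = (\<Sum>i\<le>m. if i = k then smult e ([:b, a:] ^ i * [:d, c:] ^ (m - i)) else 0)"
    by (rule sum.cong) (auto simp: coeff_monom)
  also have "\<dots> = smult e ([:b,a:]^k * [:d,c:]^(m-k))" using that by (simp add: sum.delta')
  finally show ?thesis by (simp add: Hm_def)
qed

lemma Hm_xn: "N \<ge> 1 \<Longrightarrow> Hm (a,b,c,d) N (monom 1 N - [:A:]) = [:b,a:]^N - smult A ([:d,c:]^N)"
proof -
  assume "N \<ge> 1"
  have "[:A:] = monom A 0" by (simp add: monom_0)
  then show ?thesis by (simp add: Hm_diff Hm_monom)
qed

lemma key:
  fixes al be ga de A :: "'a::field"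
  assumes N: "N \<ge> 1" and irr: "irreducible (monom 1 N - [:A:])"
    and co: "al^N - A*ga^N \<noteq> 0" and mi: "mul2 (al,be,ga,de) sv = (1,0,0,1)"
  shows "degree (Hm (al,be,ga,de) N (monom 1 N - [:A:])) = N
     \<and> irreducible (Hm (al,be,ga,de) N (monom 1 N - [:A:]))"
proof -
  have e: "Hm (al,be,ga,de) N (monom 1 N - [:A:]) = [:be,al:]^N - smult A ([:de,ga:]^N)"
    using Hm_xn[OF N] .
  have "coeff (Hm (al,be,ga,de) N (monom 1 N - [:A:])) N = al^N - A*ga^N"
    unfolding e by (simp add: coeff_lin_pow)
  then have d: "degree (Hm (al,be,ga,de) N (monom 1 N - [:A:])) = N"
    using co Hm_degree by (metis le_antisym le_degree)
  show ?thesis using d Hm_preserve[OF mi irr degree_xn_minus[OF N] d] by simp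
qed

lemma Sf: "S_t t (monom 1 n - [:A::'a::field:]) = monom 1 (n*t) - [:A:]"
  by (simp add: S_t_def pcompose_diff pcompose_monom1 monom_power mult.commute)

theorem lemma5p4:
  fixes a b c d A :: "'a::{finite, field}" and n t :: nat
  assumes "t \<ge> 2" and "n \<ge> 1"
    and "gl2 (a, b, c, d)"
    and "irreducible (monom 1 (n * t) - [:A:])"
    and "c \<noteq> 0 \<longrightarrow> A \<noteq> - d / c"
    and "even t \<longrightarrow> card (UNIV :: 'a set) mod 4 = 1"
  shows "irreducible (P_sig (inv2 (a, b, c, d)) (monom 1 n - [:A:]))
       \<and> degree (P_sig (inv2 (a, b, c, d)) (monom 1 n - [:A:])) = n
       \<and> nonzero_at (P_sig (inv2 (a, b, c, d)) (monom 1 n - [:A:])) (moeb_infty (a, b, c, d))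
       \<and> irreducible (R_trans (a, b, c, d) t (P_sig (inv2 (a, b, c, d)) (monom 1 n - [:A:])))"
proof -
  define D where "D = a*d - b*c"
  have D: "D \<noteq> 0" using assms(3) by (simp add: gl2_def D_def)
  have tau: "inv2 (a,b,c,d) = (d/D, -b/D, -c/D, a/D)" by (simp add: inv2_def Let_def D_def)
  have mi: "mul2 (d/D, -b/D, -c/D, a/D) (a,b,c,d) = (1,0,0,1)"
    using mul2_inv2[OF assms(3)] tau by simp
  define f where "f = monom (1::'a) n - [:A:]"
  have df: "degree f = n" using degree_xn_minus assms(2) f_def by auto
  have irrf: "irreducible f"
  proof (rule irr_intro)
    show "1 \<le> degree f" using df assms(2) by simp
    fix u v assume uv: "f = u * v"
    have "monom 1 (n*t) - [:A:] = pcompose f (monom 1 t)"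
      using Sf[of t n A] by (simp add: f_def S_t_def)
    also have "\<dots> = pcompose u (monom 1 t) * pcompose v (monom 1 t)" by (simp add: uv pcompose_mult)
    finally have "degree (pcompose u (monom 1 t)) = 0 \<or> degree (pcompose v (monom 1 t)) = 0"
      by (rule irr_split[OF assms(4)])
    then show "degree u = 0 \<or> degree v = 0" using assms(1) by (simp add: degree_pcompose degree_monom_eq)
  qed
  have cond: "(d/D)^N - A*(-c/D)^N \<noteq> 0" if h: "c \<noteq> 0 \<longrightarrow> A \<noteq> (-d/c)^N" and N1: "N \<ge> 1" for N
  proof (cases "c = 0")
    case True then have "d \<noteq> 0" using D D_def by auto
    then show ?thesis using True D N1 by (simp add: power_0_left)
  next
    case False
    show ?thesis
    proof
      assume h0: "(d/D)^N - A*(-c/D)^N = 0"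
      have y: "(-c/D)^N \<noteq> 0" using False D by simp
      have A1: "A = (d/D)^N / (-c/D)^N" using h0 y by (simp add: eq_divide_eq)
      have q: "(d/D)/(-c/D) = -d/c" using False D by (simp add: field_simps)
      have A2: "(d/D)^N / (-c/D)^N = (-d/c)^N" by (simp only: power_divide[symmetric] q)
      show False using A1 A2 h False by simp
    qed
  qed
  have An: "(d/D)^n - A*(-c/D)^n \<noteq> 0"
  proof (rule cond)
    show "c \<noteq> 0 \<longrightarrow> A \<noteq> (-d/c)^n"
    proof (cases "n = 1")
      case True then show ?thesis using assms(5) by simp
    next
      case False then have "n \<ge> 2" using assms(2) by simp
      then show ?thesis using no_power[OF assms(4), of "-d/c"] assms(1) by simp
    qed
  qed (rule assms(2))
  have nt: "n * t \<ge> 2" using assms(1,2) mult_le_mono[of 1 n 2 t] by simp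
  have Ant0: "A \<noteq> (-d/c)^(n*t)" using no_power[of "n*t" 1 A "-d/c"] assms(4) nt by simp
  have nt1: "n * t \<ge> 1" using nt by linarith
  have Ant: "(d/D)^(n*t) - A*(-c/D)^(n*t) \<noteq> 0"
    using cond[OF _ nt1] Ant0 by blast
  note K1 = key[OF assms(2) irrf[unfolded f_def] An mi]
  have g0: "P_sig (inv2 (a,b,c,d)) (monom 1 n - [:A:]) = Hm (d/D, -b/D, -c/D, a/D) n f"
    using df by (simp add: P_sig_Hm tau f_def)
  have dg0: "degree (Hm (d/D, -b/D, -c/D, a/D) n f) = n" using K1 f_def by simp
  have ig0: "irreducible (Hm (d/D, -b/D, -c/D, a/D) n f)" using K1 f_def by simp
  have nz: "nonzero_at (Hm (d/D, -b/D, -c/D, a/D) n f) (moeb_infty (a, b, c, d))"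
  proof (cases "c = 0")
    case True then show ?thesis by (simp add: moeb_infty_def nonzero_at_def)
  next
    case False
    have e1: "poly [:a/D, -c/D:] (a/c) = 0" using False D by (simp add: field_simps)
    have g: "poly [:-b/D, d/D:] (a/c) = (a*d - b*c)/(D*c)" using False D by (simp add: field_simps)
    have e2: "poly [:-b/D, d/D:] (a/c) = 1/c" unfolding g D_def[symmetric] using D by simp
    have "poly (Hm (d/D, -b/D, -c/D, a/D) n f) (a/c)
       = (poly [:-b/D, d/D:] (a/c))^n - A * (poly [:a/D, -c/D:] (a/c))^n"
      by (simp only: f_def Hm_xn[OF assms(2)] poly_diff poly_smult poly_power)
    also have "\<dots> = (1/c)^n" unfolding e1 e2 using assms(2) by (simp add: power_0_left)
    finally have "poly (Hm (d/D, -b/D, -c/D, a/D) n f) (a/c) = (1/c)^n" .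
    then show ?thesis using False by (simp add: moeb_infty_def nonzero_at_def)
  qed
  have back1: "P_sig (a,b,c,d) (Hm (d/D, -b/D, -c/D, a/D) n f) = f"
    using dg0 Hm_comp[of a b c d n "d/D" "-b/D" "-c/D" "a/D" f] mi Hm_id[of f n] df
    by (simp add: P_sig_Hm)
  note K2 = key[OF nt1 assms(4) Ant mi]
  have r: "R_trans (a,b,c,d) t (Hm (d/D, -b/D, -c/D, a/D) n f)
      = Hm (d/D, -b/D, -c/D, a/D) (n*t) (monom 1 (n*t) - [:A:])"
    unfolding R_trans_def back1 unfolding f_def Sf tau
    using degree_xn_minus[OF nt1, of A] by (simp add: P_sig_Hm)
  have "irreducible (R_trans (a,b,c,d) t (Hm (d/D, -b/D, -c/D, a/D) n f))"
    unfolding r using K2 by simp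
  then show ?thesis using g0 dg0 ig0 nz by simp
qed

end
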